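(* Let $\alpha,\beta>0$, $n\ge4$, and let $3\le j_1<\dots<j_r\le n-2$. For $1\le j\le n-2$ let $x_j$ be the event that box $(n-j-1,j)$ (on the third main diagonal) is non-empty. Then \[\mathbb{P}_{n,\alpha,\beta}(x_{j_1},\dots,x_{j_r},0_{n-1,1},\beta_{n,1})=\mathbb{P}_{n,\alpha,\beta}(x_{j_1},\dots,x_{j_r},\beta_{n-1,2}),\] where $0_{n-1,1}$ is the event that box $(n-1,1)$ is empty, $\beta_{n,1}$ the event that box $(n,1)$ contains $\beta$, and $\beta_{n-1,2}$ the event that box $(n-1,2)$ contains $\beta$.
   Context: A staircase tableau of size $n$ has boxes $(i,j)$ with $i,j\ge1$ and $i+j\le n+1$, rows numbered from the top and columns from the left. An $\alpha/\beta$-staircase tableau of size $n$ is a filling in which each box is empty or contains $\alpha$ or $\beta$, such that: all boxes in the same column and above an $\alpha$ are empty; all boxes in the same row and to the left of a $\beta$ are empty; every main-diagonal box (with $i+j=n+1$) contains a symbol. $\overline{\mathcal{S}}_n$ is the set of these. The weight is $wt(S)=\alpha^{N_\alpha}\beta^{N_\beta}$ ($N_\alpha,N_\beta$ the numbers of $\alpha$'s, $\beta$'s), and $\mathbb{P}_{n,\alpha,\beta}(S)=wt(S)/\sum_{T\in\overline{\mathcal{S}}_n}wt(T)$. $\mathbb{P}_{n,\alpha,\beta}(E_1,\dots,E_m)$ denotes the probability of the intersection of the events. *)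

theory Defs
  imports Complex_Main
begin

datatype sym = Alpha | Beta

text \<open>Boxes (i,j) of the staircase of size n: i,j \<ge> 1, i + j \<le> n + 1
 (i = row from the top, j = column from the left).\<close>
definition box :: "nat \<Rightarrow> nat \<times> nat \<Rightarrow> bool" where
  "box n p \<longleftrightarrow> 1 \<le> fst p \<and> 1 \<le> snd p \<and> fst p + snd p \<le> n + 1"

definition is_staircase :: "nat \<Rightarrow> (nat \<times> nat \<Rightarrow> sym option) \<Rightarrow> bool" where
  "is_staircase n S \<longleftrightarrow>
     (\<forall>p. \<not> box n p \<longrightarrow> S p = None) \<and>
     (\<forall>i j. box n (i,j) \<and> S (i,j) = Some Alpha \<longrightarrow> (\<forall>i'. 1 \<le> i' \<and> i' < i \<longrightarrow> S (i',j) = None)) \<and>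
     (\<forall>i j. box n (i,j) \<and> S (i,j) = Some Beta \<longrightarrow> (\<forall>j'. 1 \<le> j' \<and> j' < j \<longrightarrow> S (i,j') = None)) \<and>
     (\<forall>i j. box n (i,j) \<and> i + j = n + 1 \<longrightarrow> S (i,j) \<noteq> None)"

definition staircases :: "nat \<Rightarrow> (nat \<times> nat \<Rightarrow> sym option) set" where
  "staircases n = {S. is_staircase n S}"

definition N_sym :: "nat \<Rightarrow> sym \<Rightarrow> (nat \<times> nat \<Rightarrow> sym option) \<Rightarrow> nat" where
  "N_sym n s S = card {p. box n p \<and> S p = Some s}"

definition wt :: "nat \<Rightarrow> real \<Rightarrow> real \<Rightarrow> (nat \<times> nat \<Rightarrow> sym option) \<Rightarrow> real" where
  "wt n a b S = a ^ N_sym n Alpha S * b ^ N_sym n Beta S"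

definition prob_st :: "nat \<Rightarrow> real \<Rightarrow> real \<Rightarrow> ((nat \<times> nat \<Rightarrow> sym option) \<Rightarrow> bool) \<Rightarrow> real" where
  "prob_st n a b E =
     (\<Sum>S\<in>{S\<in>staircases n. E S}. wt n a b S) / (\<Sum>S\<in>staircases n. wt n a b S)"

end

theory Submission
  imports Defs
begin

definition sig :: "nat \<Rightarrow> nat \<times> nat \<Rightarrow> nat \<times> nat" where
  "sig n p = (let i = fst p; j = snd p in
     if i \<le> n-2 \<and> j = 1 then (i,2) else if i \<le> n-2 \<and> j = 2 then (i,1)
     else if p = (n,1) then (n-1,2) else if p = (n-1,2) then (n,1) else p)"

lemma sig_invol: "n \<ge> 4 \<Longrightarrow> sig n (sig n p) = p"
  by (cases p) (auto simp: sig_def Let_def)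

lemma sig_box: "n \<ge> 4 \<Longrightarrow> box n (sig n p) = box n p"
  by (cases p) (auto simp: sig_def Let_def box_def)

lemma sig_inj: "n \<ge> 4 \<Longrightarrow> inj (sig n)"
  by (metis injI sig_invol)

lemma N_sym_sig: assumes "n \<ge> 4" shows "N_sym n s (S \<circ> sig n) = N_sym n s S"
proof -
  have "{p. box n p \<and> (S \<circ> sig n) p = Some s} = sig n ` {p. box n p \<and> S p = Some s}"
  proof (rule set_eqI, rule iffI)
    fix x assume "x \<in> {p. box n p \<and> (S \<circ> sig n) p = Some s}"
    hence "sig n x \<in> {p. box n p \<and> S p = Some s}" "x = sig n (sig n x)"
      using assms by (auto simp: sig_box sig_invol)
    thus "x \<in> sig n ` {p. box n p \<and> S p = Some s}" by blast
  next
    fix x assume "x \<in> sig n ` {p. box n p \<and> S p = Some s}"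
    then obtain y where "x = sig n y" "box n y" "S y = Some s" by blast
    thus "x \<in> {p. box n p \<and> (S \<circ> sig n) p = Some s}"
      using assms by (auto simp: sig_box sig_invol)
  qed
  thus ?thesis unfolding N_sym_def
    by (simp add: card_image inj_on_subset[OF sig_inj[OF assms]])
qed

lemma wt_sig: "n \<ge> 4 \<Longrightarrow> wt n a b (S \<circ> sig n) = wt n a b S"
  by (simp add: wt_def N_sym_sig)

lemma stairD:
  assumes "is_staircase n S"
  shows "\<And>p. \<not> box n p \<Longrightarrow> S p = None"
    and "\<And>i j i'. box n (i,j) \<Longrightarrow> S (i,j) = Some Alpha \<Longrightarrow> 1 \<le> i' \<Longrightarrow> i' < i \<Longrightarrow> S (i',j) = None"
    and "\<And>i j j'. box n (i,j) \<Longrightarrow> S (i,j) = Some Beta \<Longrightarrow> 1 \<le> j' \<Longrightarrow> j' < j \<Longrightarrow> S (i,j') = None"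
    and "\<And>i j. box n (i,j) \<Longrightarrow> i + j = n + 1 \<Longrightarrow> S (i,j) \<noteq> None"
  using assms unfolding is_staircase_def by blast+

lemma sv:
  assumes "n \<ge> 4"
  shows "i \<le> n-2 \<Longrightarrow> sig n (i,1) = (i,2)" "i \<le> n-2 \<Longrightarrow> sig n (i,2) = (i,1)"
    "j \<ge> 3 \<Longrightarrow> sig n (i,j) = (i,j)"
    "sig n (n-1,1) = (n-1,1)" "sig n (n,1) = (n-1,2)" "sig n (n-1,2) = (n,1)"
  using assms by (auto simp: sig_def Let_def)

lemma box_cases:
  assumes "box n (i,j)" "n \<ge> 4"
  obtains "j \<ge> 3" | "j = 1" "i \<ge> 1" "i \<le> n-2" | "j = 1" "i = n-1" | "j = 1" "i = n"
    | "j = 2" "i \<ge> 1" "i \<le> n-2" | "j = 2" "i = n-1"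
proof -
  have h: "1 \<le> i" "1 \<le> j" "i + j \<le> n + 1" using assms(1) by (auto simp: box_def)
  show thesis
  proof (cases "j \<ge> 3")
    case True then show ?thesis by (rule that(1))
  next
    case False
    then consider "j = 1" | "j = 2" using h by linarith
    then show ?thesis
    proof cases
      case 1
      then consider "i \<le> n-2" | "i = n-1" | "i = n" using h by linarith
      then show ?thesis using that 1 h by metis
    next
      case 2
      then consider "i \<le> n-2" | "i = n-1" using h by linarith
      then show ?thesis using that 2 h by metis
    qed
  qed
qed

lemma lt_cases:
  fixes i i' n :: nat
  assumes "i' < i" "i \<le> n" "n \<ge> 4"
  obtains "i' \<le> n-2" | "i' = n-1"
  using assms by linarith

lemma stair_A:
  assumes n: "n \<ge> 4" and st: "is_staircase n S" and b: "S (n,1) = Some Beta"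
    and e: "S (n-1,1) = None" and a: "S (n-1,2) = Some Alpha"
  shows "is_staircase n (S \<circ> sig n)"
proof -
  note D = stairD[OF st]
  note sv = sv[OF n]
  have col2: "S (i,2) = None" if "i \<le> n-2" for i
  proof (cases "i = 0")
    case True thus ?thesis using D(1)[of "(i,2)"] by (simp add: box_def)
  next
    case False thus ?thesis using D(2)[of "n-1" 2 i] a that n by (simp add: box_def)
  qed
  show ?thesis unfolding is_staircase_def
  proof (intro conjI allI impI)
    fix p assume "\<not> box n p" thus "(S \<circ> sig n) p = None" using D(1) sig_box[OF n] by simp
  next
    fix i j i' assume h: "box n (i,j) \<and> (S \<circ> sig n) (i,j) = Some Alpha" "1 \<le> i' \<and> i' < i"
    hence hb: "box n (i,j)" and ha: "S (sig n (i,j)) = Some Alpha" and i': "1 \<le> i'" "i' < i" by auto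
    have ile: "i \<le> n" using hb unfolding box_def by simp
    show "(S \<circ> sig n) (i',j) = None"
    proof (cases rule: box_cases[OF hb n])
      case 1 thus ?thesis using ha D(2)[OF hb _ i'] sv(3) by simp
    next
      case 2 thus ?thesis using ha sv(1) col2 by simp
    next
      case 3 thus ?thesis using ha sv(4) e by simp
    next
      case 4 thus ?thesis
        by (cases rule: lt_cases[OF i'(2) ile n]) (use sv col2 e in simp_all)
    next
      case 5
      have "S (i,1) = Some Alpha" using ha sv(2) 5 by simp
      hence "S (i',1) = None" using D(2)[of i 1 i'] 5 i' hb n by (simp add: box_def)
      thus ?thesis using sv(2)[of i'] 5 i' by simp
    next
      case 6 thus ?thesis using ha sv(6) b by simp
    qed
  next
    fix i j j' assume h: "box n (i,j) \<and> (S \<circ> sig n) (i,j) = Some Beta" "1 \<le> j' \<and> j' < j"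
    hence hb: "box n (i,j)" and ha: "S (sig n (i,j)) = Some Beta" and j': "1 \<le> j'" "j' < j" by auto
    show "(S \<circ> sig n) (i,j') = None"
    proof (cases rule: box_cases[OF hb n])
      case 1
      hence sb: "S (i,j) = Some Beta" using ha sv(3) by simp
      have "i + j \<le> n + 1" using hb unfolding box_def by simp
      hence "i \<le> n-2" using 1 by linarith
      moreover have "S (i,1) = None" "S (i,2) = None" using D(3)[OF hb sb] 1 by auto
      ultimately show ?thesis using D(3)[OF hb sb j'] sv j'
        by (cases "j' = 1"; cases "j' = 2") auto
    next
      case 2 thus ?thesis using j' by simp
    next
      case 3 thus ?thesis using j' by simp
    next
      case 4 thus ?thesis using j' by simp
    next
      case 5
      hence "j' = 1" using j' by simp
      thus ?thesis using 5 sv col2 by simp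
    next
      case 6
      hence "j' = 1" using j' by simp
      thus ?thesis using 6 sv e by simp
    qed
  next
    fix i j assume h: "box n (i,j) \<and> i + j = n + 1"
    hence hb: "box n (i,j)" and d: "i + j = n + 1" by auto
    show "(S \<circ> sig n) (i,j) \<noteq> None"
    proof (cases rule: box_cases[OF hb n])
      case 1 thus ?thesis using D(4)[OF hb d] sv(3) by simp
    qed (use d n sv a b in auto)
  qed
qed

lemma stair_B:
  assumes n: "n \<ge> 4" and st: "is_staircase n S" and a: "S (n,1) = Some Alpha"
    and e: "S (n-1,1) = None" and b: "S (n-1,2) = Some Beta"
  shows "is_staircase n (S \<circ> sig n)"
proof -
  note D = stairD[OF st]
  note sv = sv[OF n]
  have col1: "S (i,1) = None" if "i \<le> n-2" for i
  proof (cases "i = 0")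
    case True thus ?thesis using D(1)[of "(i,1)"] by (simp add: box_def)
  next
    case False thus ?thesis using D(2)[of n 1 i] a that n by (simp add: box_def)
  qed
  show ?thesis unfolding is_staircase_def
  proof (intro conjI allI impI)
    fix p assume "\<not> box n p" thus "(S \<circ> sig n) p = None" using D(1) sig_box[OF n] by simp
  next
    fix i j i' assume h: "box n (i,j) \<and> (S \<circ> sig n) (i,j) = Some Alpha" "1 \<le> i' \<and> i' < i"
    hence hb: "box n (i,j)" and ha: "S (sig n (i,j)) = Some Alpha" and i': "1 \<le> i'" "i' < i" by auto
    have ile: "i \<le> n" using hb unfolding box_def by simp
    show "(S \<circ> sig n) (i',j) = None"
    proof (cases rule: box_cases[OF hb n])
      case 1 thus ?thesis using ha D(2)[OF hb _ i'] sv(3) by simp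
    next
      case 2
      have "S (i,2) = Some Alpha" using ha sv(1) 2 by simp
      hence "S (i',2) = None" using D(2)[of i 2 i'] 2 i' hb n by (simp add: box_def)
      thus ?thesis using sv(1)[of i'] 2 i' by simp
    next
      case 3 thus ?thesis using ha sv(4) e by simp
    next
      case 4 thus ?thesis using ha sv(5) b by simp
    next
      case 5 thus ?thesis using ha sv(2) col1 by simp
    next
      case 6 
      have "i' \<le> n-2" using 6 i' by simp
      thus ?thesis using 6 sv(2) col1 by simp
    qed
  next
    fix i j j' assume h: "box n (i,j) \<and> (S \<circ> sig n) (i,j) = Some Beta" "1 \<le> j' \<and> j' < j"
    hence hb: "box n (i,j)" and ha: "S (sig n (i,j)) = Some Beta" and j': "1 \<le> j'" "j' < j" by auto
    show "(S \<circ> sig n) (i,j') = None"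
    proof (cases rule: box_cases[OF hb n])
      case 1
      hence sb: "S (i,j) = Some Beta" using ha sv(3) by simp
      have "i + j \<le> n + 1" using hb unfolding box_def by simp
      hence "i \<le> n-2" using 1 by linarith
      moreover have "S (i,1) = None" "S (i,2) = None" using D(3)[OF hb sb] 1 by auto
      ultimately show ?thesis using D(3)[OF hb sb j'] sv j'
        by (cases "j' = 1"; cases "j' = 2") auto
    next
      case 2 thus ?thesis using j' by simp
    next
      case 3 thus ?thesis using j' by simp
    next
      case 4 thus ?thesis using j' by simp
    next
      case 5 thus ?thesis using ha sv col1 by simp
    next
      case 6 thus ?thesis using ha sv a by simp
    qed
  next
    fix i j assume h: "box n (i,j) \<and> i + j = n + 1"
    hence hb: "box n (i,j)" and d: "i + j = n + 1" by auto
    show "(S \<circ> sig n) (i,j) \<noteq> None"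
    proof (cases rule: box_cases[OF hb n])
      case 1 thus ?thesis using D(4)[OF hb d] sv(3) by simp
    qed (use d n sv a b in auto)
  qed
qed

lemma sig_vals:
  assumes "n \<ge> 4"
  shows "sig n (n,1) = (n-1,2)" "sig n (n-1,2) = (n,1)" "sig n (n-1,1) = (n-1,1)"
    "j \<ge> 3 \<Longrightarrow> sig n (i,j) = (i,j)"
  using assms by (auto simp: sig_def Let_def)

lemma comp_sig_invol: "n \<ge> 4 \<Longrightarrow> S \<circ> sig n \<circ> sig n = S"
  by (auto simp: sig_invol)

lemma opt_alpha: "x \<noteq> None \<Longrightarrow> x \<noteq> Some Beta \<Longrightarrow> x = Some Alpha"
  by (metis option.exhaust sym.exhaust)

theorem lemma4p4:
  fixes a b :: real and n :: nat and J :: "nat set"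
  assumes "a > 0" and "b > 0" and "n \<ge> 4"
    and "J \<subseteq> {3..n-2}"
  shows "prob_st n a b (\<lambda>S. (\<forall>j\<in>J. S (n-j-1, j) \<noteq> None) \<and> S (n-1, 1) = None \<and> S (n, 1) = Some Beta)
       = prob_st n a b (\<lambda>S. (\<forall>j\<in>J. S (n-j-1, j) \<noteq> None) \<and> S (n-1, 2) = Some Beta)"
proof -
  have n: "n \<ge> 4" by fact
  define X where "X = (\<lambda>S::nat \<times> nat \<Rightarrow> sym option. \<forall>j\<in>J. S (n-j-1, j) \<noteq> None)"
  define E1 where "E1 = {S\<in>staircases n. X S \<and> S (n-1, 1) = None \<and> S (n, 1) = Some Beta}"
  define E2 where "E2 = {S\<in>staircases n. X S \<and> S (n-1, 2) = Some Beta}"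
  define f where "f = (\<lambda>S::nat \<times> nat \<Rightarrow> sym option. if S (n-1,2) = Some Beta then S else S \<circ> sig n)"
  define g where "g = (\<lambda>S::nat \<times> nat \<Rightarrow> sym option. if S (n,1) = Some Beta then S else S \<circ> sig n)"
  have Xsig: "X (S \<circ> sig n) = X S" for S
  proof -
    have "\<forall>j\<in>J. sig n (n-j-1, j) = (n-j-1, j)" using assms(4) sig_vals(4)[OF n] by auto
    thus ?thesis unfolding X_def by simp
  qed
  have diag: "S (n,1) \<noteq> None" "S (n-1,2) \<noteq> None" if "is_staircase n S" for S
    using stairD(4)[OF that, of n 1] stairD(4)[OF that, of "n-1" 2] n by (auto simp: box_def)
  have bij: "bij_betw f E1 E2"
  proof (rule bij_betw_byWitness[where f'=g])
    show "\<forall>S\<in>E1. g (f S) = S"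
    proof
      fix S assume "S \<in> E1"
      show "g (f S) = S"
      proof (cases "S (n-1,2) = Some Beta")
        case True thus ?thesis using \<open>S \<in> E1\<close> by (simp add: f_def g_def E1_def)
      next
        case False
        hence "S (n-1,2) = Some Alpha" using diag[of S] \<open>S \<in> E1\<close>
          by (intro opt_alpha) (auto simp: E1_def staircases_def)
        thus ?thesis using False by (simp add: f_def g_def sig_vals[OF n] sig_vals[OF n, simplified] comp_sig_invol[OF n])
      qed
    qed
  next
    show "\<forall>S\<in>E2. f (g S) = S"
    proof
      fix S assume "S \<in> E2"
      show "f (g S) = S"
      proof (cases "S (n,1) = Some Beta")
        case True thus ?thesis using \<open>S \<in> E2\<close> by (simp add: f_def g_def E2_def)
      next
        case False
        hence "S (n,1) = Some Alpha" using diag[of S] \<open>S \<in> E2\<close>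
          by (intro opt_alpha) (auto simp: E2_def staircases_def)
        thus ?thesis using False by (simp add: f_def g_def sig_vals[OF n] sig_vals[OF n, simplified] comp_sig_invol[OF n])
      qed
    qed
  next
    show "f ` E1 \<subseteq> E2"
    proof
      fix T assume "T \<in> f ` E1"
      then obtain S where S: "S \<in> E1" "T = f S" by blast
      hence st: "is_staircase n S" and x: "X S" and e: "S (n-1,1) = None" and b: "S (n,1) = Some Beta"
        by (auto simp: E1_def staircases_def)
      show "T \<in> E2"
      proof (cases "S (n-1,2) = Some Beta")
        case True thus ?thesis using S by (simp add: f_def E1_def E2_def)
      next
        case False
        hence a: "S (n-1,2) = Some Alpha" using diag[OF st]
          by (intro opt_alpha) auto
        show ?thesis using stair_A[OF n st b e a] x b False S(2)
          by (simp add: f_def E2_def staircases_def Xsig sig_vals[OF n] sig_vals[OF n, simplified])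
      qed
    qed
  next
    show "g ` E2 \<subseteq> E1"
    proof
      fix T assume "T \<in> g ` E2"
      then obtain S where S: "S \<in> E2" "T = g S" by blast
      hence st: "is_staircase n S" and x: "X S" and b: "S (n-1,2) = Some Beta"
        by (auto simp: E2_def staircases_def)
      have e: "S (n-1,1) = None"
        using stairD(3)[OF st, of "n-1" 2 1] b n by (simp add: box_def)
      show "T \<in> E1"
      proof (cases "S (n,1) = Some Beta")
        case True thus ?thesis using S e by (simp add: g_def E1_def E2_def)
      next
        case False
        hence a: "S (n,1) = Some Alpha" using diag[OF st]
          by (intro opt_alpha) auto
        show ?thesis using stair_B[OF n st a e b] x e b False S(2)
          by (simp add: g_def E1_def staircases_def Xsig sig_vals[OF n] sig_vals[OF n, simplified])
      qed
    qed
  qed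
  have wf: "wt n a b (f S) = wt n a b S" for S
    by (simp add: f_def wt_sig[OF n])
  have "(\<Sum>S\<in>E1. wt n a b S) = (\<Sum>S\<in>E1. wt n a b (f S))" by (simp add: wf)
  also have "\<dots> = (\<Sum>S\<in>E2. wt n a b S)" by (rule sum.reindex_bij_betw[OF bij])
  finally have "(\<Sum>S\<in>E1. wt n a b S) = (\<Sum>S\<in>E2. wt n a b S)" .
  thus ?thesis unfolding prob_st_def E1_def E2_def X_def by simp
qed

end
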